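(* For a topological space $X$ the following are equivalent: (1) $X$ is an Alster space; (2) $X$ satisfies ${\sf S}_1(\mathcal{G}_K,\mathcal{G})$; (3) $X$ satisfies ${\sf S}_1(\mathcal{G}_K,\mathcal{G}_{\Omega})$.
   Context: All spaces are infinite ${\sf T}_1$ topological spaces. For a space $X$: $\mathcal{G}_K$ is the family of all collections $\mathcal{U}$ of ${\sf G}_\delta$ subsets of $X$ such that $X\notin\mathcal{U}$ and for each compact $C\subseteq X$ there is $U\in\mathcal{U}$ with $C\subseteq U$. $\mathcal{G}$ is the family of all covers of $X$ by ${\sf G}_\delta$ sets. $\mathcal{G}_\Omega$ is the family of $\mathcal{U}\in\mathcal{G}$ with $X\notin\mathcal{U}$ such that every finite $F\subseteq X$ is contained in some member of $\mathcal{U}$. $X$ is an Alster space if every member of $\mathcal{G}_K$ has a countable subfamily covering $X$. ${\sf S}_1(\mathcal{A},\mathcal{B})$: for each sequence $(A_n:n\in\mathbb{N})$ of elements of $\mathcal{A}$ there are $B_n\in A_n$ with $\{B_n:n\in\mathbb{N}\}\in\mathcal{B}$. *)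

theory Defs
  imports "HOL-Analysis.Analysis"
begin

definition GK :: "'a topology \<Rightarrow> 'a set set set" where
  "GK X = {\<U>. (\<forall>U\<in>\<U>. gdelta_in X U) \<and> topspace X \<notin> \<U> \<and>
              (\<forall>C. C \<subseteq> topspace X \<and> compactin X C \<longrightarrow> (\<exists>U\<in>\<U>. C \<subseteq> U))}"

definition GCov :: "'a topology \<Rightarrow> 'a set set set" where
  "GCov X = {\<U>. (\<forall>U\<in>\<U>. gdelta_in X U) \<and> \<Union>\<U> = topspace X}"

definition GOmega :: "'a topology \<Rightarrow> 'a set set set" where
  "GOmega X = {\<U>. \<U> \<in> GCov X \<and> topspace X \<notin> \<U> \<and>
              (\<forall>F. finite F \<and> F \<subseteq> topspace X \<longrightarrow> (\<exists>U\<in>\<U>. F \<subseteq> U))}"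

definition alster_space :: "'a topology \<Rightarrow> bool" where
  "alster_space X \<longleftrightarrow> (\<forall>\<U>\<in>GK X. \<exists>\<V>. \<V> \<subseteq> \<U> \<and> countable \<V> \<and> topspace X \<subseteq> \<Union>\<V>)"

definition S1 :: "'b set set \<Rightarrow> 'b set set \<Rightarrow> bool" where
  "S1 \<A> \<B> \<longleftrightarrow> (\<forall>A :: nat \<Rightarrow> 'b set. (\<forall>n. A n \<in> \<A>) \<longrightarrow>
                    (\<exists>B. (\<forall>n. B n \<in> A n) \<and> range B \<in> \<B>))"

end

theory Submission
  imports Defs
begin

lemma GK_sub:
  assumes "\<U> \<in> GK X" and "K \<subseteq> topspace X" and "compactin X K"
  shows "{U\<in>\<U>. K \<subseteq> U} \<in> GK X"
proof -
  have "\<exists>U\<in>{U\<in>\<U>. K \<subseteq> U}. C \<subseteq> U" if "C \<subseteq> topspace X" "compactin X C" for C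
  proof -
    have "compactin X (K \<union> C)" using assms that compactin_Un by blast
    moreover have "K \<union> C \<subseteq> topspace X" using assms that by blast
    ultimately obtain U where "U \<in> \<U>" "K \<union> C \<subseteq> U" using assms(1) unfolding GK_def by blast
    then show ?thesis by blast
  qed
  then show ?thesis using assms(1) unfolding GK_def by blast
qed

definition ocov :: "'a topology \<Rightarrow> nat \<Rightarrow> 'a set set \<Rightarrow> 'a set set \<Rightarrow> bool" where
  "ocov X m \<U> S \<longleftrightarrow> S \<subseteq> \<U> \<and> countable S \<and> S \<noteq> {} \<and>
     (\<forall>F. finite F \<and> F \<subseteq> topspace X \<and> card F \<le> m \<longrightarrow> (\<exists>U\<in>S. F \<subseteq> U))"

lemma ocovD:
  assumes "ocov X m \<U> S"
  shows "S \<subseteq> \<U>" "countable S" "S \<noteq> {}"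
    "\<And>F. finite F \<Longrightarrow> F \<subseteq> topspace X \<Longrightarrow> card F \<le> m \<Longrightarrow> \<exists>U\<in>S. F \<subseteq> U"
  using assms unfolding ocov_def by auto

lemma alster_m:
  assumes A: "alster_space X" and inf: "infinite (topspace X)"
  shows "\<forall>\<U>\<in>GK X. \<exists>S. ocov X m \<U> S"
proof (induction m)
  case 0
  show ?case
  proof
    fix \<U> assume "\<U> \<in> GK X"
    then obtain U where "U \<in> \<U>" unfolding GK_def by blast
    then show "\<exists>S. ocov X 0 \<U> S"
      unfolding ocov_def by (intro exI[of _ "{U}"]) auto
  qed
next
  case (Suc m)
  show ?case
  proof
    fix \<U> assume U: "\<U> \<in> GK X"
    define Comp where "Comp = {K. K \<subseteq> topspace X \<and> compactin X K}"
    have "\<forall>K. \<exists>S. K \<in> Comp \<longrightarrow> ocov X m {U\<in>\<U>. K \<subseteq> U} S"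
    proof
      fix K
      show "\<exists>S. K \<in> Comp \<longrightarrow> ocov X m {U\<in>\<U>. K \<subseteq> U} S"
      proof (cases "K \<in> Comp")
        case True
        then have "{U\<in>\<U>. K \<subseteq> U} \<in> GK X" using GK_sub[OF U] unfolding Comp_def by blast
        then show ?thesis using Suc.IH by blast
      qed auto
    qed
    then obtain S where S00: "\<forall>K. K \<in> Comp \<longrightarrow> ocov X m {U\<in>\<U>. K \<subseteq> U} (S K)"
      by (rule choice[THEN exE]) blast
    then have S0: "\<And>K. K \<in> Comp \<Longrightarrow> ocov X m {U\<in>\<U>. K \<subseteq> U} (S K)" by blast
    have Ssub: "S K \<subseteq> \<U>" "\<And>U. U \<in> S K \<Longrightarrow> K \<subseteq> U" "countable (S K)" "S K \<noteq> {}"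
      "\<And>F. finite F \<Longrightarrow> F \<subseteq> topspace X \<Longrightarrow> card F \<le> m \<Longrightarrow> \<exists>U\<in>S K. F \<subseteq> U"
      if "K \<in> Comp" for K
    proof -
      have oo: "S K \<subseteq> {U\<in>\<U>. K \<subseteq> U} \<and> countable (S K) \<and> S K \<noteq> {} \<and>
        (\<forall>F. finite F \<and> F \<subseteq> topspace X \<and> card F \<le> m \<longrightarrow> (\<exists>U\<in>S K. F \<subseteq> U))"
        using S0[OF that] unfolding ocov_def .
      note o = conjunct1[OF oo] conjunct1[OF conjunct2[OF oo]] conjunct1[OF conjunct2[OF conjunct2[OF oo]]]
        conjunct2[OF conjunct2[OF conjunct2[OF oo]]]
      show "S K \<subseteq> \<U>" using o(1) by auto
      show "\<And>U. U \<in> S K \<Longrightarrow> K \<subseteq> U" using o(1) by auto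
      show "countable (S K)" by (rule o(2))
      show "S K \<noteq> {}" by (rule o(3))
      show "\<And>F. finite F \<Longrightarrow> F \<subseteq> topspace X \<Longrightarrow> card F \<le> m \<Longrightarrow> \<exists>U\<in>S K. F \<subseteq> U"
        using o(4) by blast
    qed
    define W where "W = (\<lambda>K. \<Inter>(S K)) ` Comp"
    have "W \<in> GK X"
      unfolding GK_def
    proof (intro CollectI conjI ballI allI impI)
      fix w assume "w \<in> W"
      then obtain K where K: "K \<in> Comp" "w = \<Inter>(S K)" unfolding W_def by blast
      have "\<forall>U\<in>S K. gdelta_in X U" using Ssub(1)[OF K(1)] U unfolding GK_def by blast
      then show "gdelta_in X w" unfolding K(2) using Ssub(3,4)[OF K(1)] by (intro gdelta_in_Inter) auto
    next
      show "topspace X \<notin> W"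
      proof
        assume "topspace X \<in> W"
        then obtain K where K: "K \<in> Comp" "topspace X = \<Inter>(S K)" unfolding W_def by blast
        then obtain U0 where U0: "U0 \<in> S K" using Ssub(4)[OF K(1)] by blast
        then have "U0 \<in> \<U>" using Ssub(1)[OF K(1)] by blast
        have "topspace X \<subseteq> U0" using K(2) U0 by blast
        moreover have "U0 \<subseteq> topspace X" using \<open>U0 \<in> \<U>\<close> U gdelta_in_subset unfolding GK_def by blast
        ultimately have "topspace X \<in> \<U>" using \<open>U0 \<in> \<U>\<close> by auto
        then show False using U unfolding GK_def by auto
      qed
    next
      fix C assume "C \<subseteq> topspace X \<and> compactin X C"
      then have C: "C \<in> Comp" unfolding Comp_def by auto
      then have "C \<subseteq> \<Inter>(S C)" using Ssub(2)[OF C] by blast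
      then show "\<exists>U\<in>W. C \<subseteq> U" using C unfolding W_def by blast
    qed
    from A[unfolded alster_space_def, rule_format, OF this]
    obtain V where V: "V \<subseteq> W" "countable V" "topspace X \<subseteq> \<Union>V"
      by (elim exE conjE) assumption
    have "\<forall>v\<in>V. \<exists>K. K \<in> Comp \<and> v = \<Inter>(S K)" using V(1) unfolding W_def by blast
    then obtain g where g0: "\<forall>v\<in>V. g v \<in> Comp \<and> v = \<Inter>(S (g v))" by (rule bchoice[THEN exE]) blast
    then have g: "\<And>v. v \<in> V \<Longrightarrow> g v \<in> Comp" "\<And>v. v \<in> V \<Longrightarrow> v = \<Inter>(S (g v))" by blast+
    define S' where "S' = (\<Union>v\<in>V. S (g v))"
    have "topspace X \<noteq> {}" using inf by auto
    then obtain x where x: "x \<in> topspace X" by blast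
    then obtain v0 where v0: "v0 \<in> V" using V(3) by blast
    have "S' \<subseteq> \<U>" unfolding S'_def using g Ssub(1) by blast
    moreover have "countable S'" unfolding S'_def using g(1) Ssub(3) V(2) by (intro countable_UN) auto
    moreover have "S' \<noteq> {}" unfolding S'_def using Ssub(4)[OF g(1)[OF v0]] v0 by blast
    moreover have "\<exists>U\<in>S'. F \<subseteq> U" if F: "finite F" "F \<subseteq> topspace X" "card F \<le> Suc m" for F
      proof (cases "F = {}")
        case True
        then show ?thesis using \<open>S' \<noteq> {}\<close> by blast
      next
        case False
        then obtain y where y: "y \<in> F" by blast
        then obtain v where v: "v \<in> V" "y \<in> v" using F V(3) by blast
        have "finite (F - {y})" "F - {y} \<subseteq> topspace X" "card (F - {y}) \<le> m"
          using F y by auto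
        then obtain U' where U': "U' \<in> S (g v)" "F - {y} \<subseteq> U'"
          using Ssub(5)[OF g(1)[OF v(1)]] by blast
        have "y \<in> U'" using v g(2)[OF v(1)] U'(1) by blast
        then have "F \<subseteq> U'" using U'(2) by blast
        then show ?thesis using U'(1) v(1) unfolding S'_def by blast
      qed
    ultimately show "\<exists>S. ocov X (Suc m) \<U> S" unfolding ocov_def by blast
  qed
qed

lemma alster_omega:
  assumes A: "alster_space X" and inf: "infinite (topspace X)" and U: "\<U> \<in> GK X"
  shows "\<exists>S. S \<subseteq> \<U> \<and> countable S \<and> S \<noteq> {} \<and>
     (\<forall>F. finite F \<and> F \<subseteq> topspace X \<longrightarrow> (\<exists>U\<in>S. F \<subseteq> U))"
proof -
  have "\<forall>m. \<exists>S. ocov X m \<U> S"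
    using alster_m[OF A inf] U by blast
  then obtain S where S: "\<And>m. ocov X m \<U> (S m)" by metis
  have S1: "S m \<subseteq> \<U>" "countable (S m)" "S m \<noteq> {}" for m using ocovD(1-3)[OF S[of m]] by auto
  have S2: "\<exists>U\<in>S m. F \<subseteq> U" if "finite F" "F \<subseteq> topspace X" "card F \<le> m" for F m
    using ocovD(4)[OF S[of m] that] .
  show ?thesis
  proof (intro exI[of _ "\<Union>(range S)"] conjI allI impI)
    show "\<Union>(range S) \<subseteq> \<U>" using S1(1) by blast
    show "countable (\<Union>(range S))" using S1(2) by (intro countable_UN) auto
    show "\<Union>(range S) \<noteq> {}" using S1(3)[of 0] by blast
    fix F assume "finite F \<and> F \<subseteq> topspace X"
    then obtain U where "U \<in> S (card F)" "F \<subseteq> U" using S2[of F "card F"] by blast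
    then show "\<exists>U\<in>\<Union>(range S). F \<subseteq> U" by blast
  qed
qed

lemma GKD:
  assumes "\<U> \<in> GK X"
  shows "\<And>U. U \<in> \<U> \<Longrightarrow> gdelta_in X U" "topspace X \<notin> \<U>"
    "\<And>C. C \<subseteq> topspace X \<Longrightarrow> compactin X C \<Longrightarrow> \<exists>U\<in>\<U>. C \<subseteq> U"
    "\<And>U. U \<in> \<U> \<Longrightarrow> U \<subseteq> topspace X"
  using assms gdelta_in_subset unfolding GK_def by auto

lemma step1:
  assumes A: "alster_space X" and inf: "infinite (topspace X)"
  shows "S1 (GK X) (GOmega X)"
  unfolding S1_def
proof (intro allI impI)
  fix A :: "nat \<Rightarrow> 'a set set" assume An0: "\<forall>n. A n \<in> GK X"
  then have An: "A n \<in> GK X" for n by blast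
  define W where "W = {\<Inter>(range V) | V. \<forall>n. V n \<in> A n}"
  have "W \<in> GK X"
    unfolding GK_def
  proof (intro CollectI conjI ballI allI impI)
    fix w assume "w \<in> W"
    then obtain V where V: "\<forall>n. V n \<in> A n" "w = \<Inter>(range V)" unfolding W_def by blast
    have "\<forall>n. gdelta_in X (V n)" using V(1) GKD(1)[OF An] by blast
    then show "gdelta_in X w" unfolding V(2) by (intro gdelta_in_Inter) auto
  next
    show "topspace X \<notin> W"
    proof
      assume "topspace X \<in> W"
      then obtain V where V: "\<forall>n. V n \<in> A n" "topspace X = \<Inter>(range V)" unfolding W_def by blast
      then have "topspace X \<subseteq> V 0" by auto
      moreover have V0: "V 0 \<in> A 0" using V(1) by blast
      moreover have "V 0 \<subseteq> topspace X" using GKD(4)[OF An V0] .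
      ultimately have "topspace X \<in> A 0" by auto
      then show False using GKD(2)[OF An] by blast
    qed
  next
    fix C assume C: "C \<subseteq> topspace X \<and> compactin X C"
    have "\<forall>n. \<exists>U. U \<in> A n \<and> C \<subseteq> U" using GKD(3)[OF An] C by blast
    then obtain V where "\<forall>n. V n \<in> A n \<and> C \<subseteq> V n" by (rule choice[THEN exE]) blast
    then have "\<Inter>(range V) \<in> W" "C \<subseteq> \<Inter>(range V)" unfolding W_def by blast+
    then show "\<exists>U\<in>W. C \<subseteq> U" by blast
  qed
  from alster_omega[OF A inf this] obtain S where S: "S \<subseteq> W" "countable S" "S \<noteq> {}"
     and S4: "\<forall>F. finite F \<and> F \<subseteq> topspace X \<longrightarrow> (\<exists>U\<in>S. F \<subseteq> U)"
    by (elim exE conjE) assumption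
  have "\<forall>k. \<exists>V. (\<forall>n. V n \<in> A n) \<and> from_nat_into S k = \<Inter>(range V)"
  proof
    fix k
    have "from_nat_into S k \<in> W" using from_nat_into[OF S(3)] S(1) by blast
    then show "\<exists>V. (\<forall>n. V n \<in> A n) \<and> from_nat_into S k = \<Inter>(range V)"
      unfolding W_def by blast
  qed
  then obtain VV where VV: "\<forall>k. (\<forall>n. VV k n \<in> A n) \<and> from_nat_into S k = \<Inter>(range (VV k))"
    by (rule choice[THEN exE]) blast
  define B where "B n = VV n n" for n
  have Bin1: "B n \<in> A n" for n using conjunct1[OF spec[OF VV, of n]] unfolding B_def by (rule spec)
  then have Bin: "\<forall>n. B n \<in> A n" by (rule allI)
  have cov: "\<exists>n. F \<subseteq> B n" if "finite F" "F \<subseteq> topspace X" for F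
  proof -
    from S4[rule_format, OF conjI[OF that]] obtain s where s: "s \<in> S" "F \<subseteq> s" by (rule bexE)
    have "s \<in> range (from_nat_into S)" using range_from_nat_into[OF S(3) S(2)] s(1) by simp
    then obtain k where "s = from_nat_into S k" by (rule rangeE)
    then have "s = \<Inter>(range (VV k))" using conjunct2[OF spec[OF VV, of k]] by simp
    then have "s \<subseteq> B k" unfolding B_def by (simp add: Inter_lower)
    then show ?thesis using s(2) by (intro exI[of _ k]) (rule subset_trans)
  qed
  have gd: "gdelta_in X (B n)" for n using GKD(1)[OF An Bin1] .
  have sub: "B n \<subseteq> topspace X" for n using GKD(4)[OF An Bin1] .
  have "range B \<in> GOmega X"
    unfolding GOmega_def GCov_def
  proof (intro CollectI conjI ballI allI impI)
    show "\<And>U. U \<in> range B \<Longrightarrow> gdelta_in X U" using gd by blast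
    show "\<Union> (range B) = topspace X"
    proof
      show "\<Union> (range B) \<subseteq> topspace X" using sub by blast
      show "topspace X \<subseteq> \<Union> (range B)"
      proof
        fix x assume "x \<in> topspace X"
        then obtain n where "{x} \<subseteq> B n" using cov[of "{x}"] by auto
        then show "x \<in> \<Union> (range B)" by blast
      qed
    qed
    show "topspace X \<notin> range B"
    proof
      assume "topspace X \<in> range B"
      then obtain n where "topspace X = B n" by blast
      then have "topspace X \<in> A n" using Bin1[of n] by simp
      then show False using GKD(2)[OF An] by blast
    qed
    fix F assume FF: "finite F \<and> F \<subseteq> topspace X"
    from cov[OF conjunct1[OF FF] conjunct2[OF FF]] obtain n where "F \<subseteq> B n" by (rule exE)
    then show "\<exists>U\<in>range B. F \<subseteq> U" by (rule bexI[OF _ rangeI])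
  qed
  then show "\<exists>B. (\<forall>n. B n \<in> A n) \<and> range B \<in> GOmega X" using Bin by (intro exI[of _ B] conjI)
qed

lemma S1_mono:
  assumes sub: "BB \<subseteq> BB'" and s: "S1 AA BB" shows "S1 AA BB'"
  unfolding S1_def
proof (intro allI impI)
  fix A :: "nat \<Rightarrow> 'a set" assume "\<forall>n. A n \<in> AA"
  from mp[OF spec[OF s[unfolded S1_def], of A] this] obtain B where "\<forall>n. B n \<in> A n" "range B \<in> BB"
    by (elim exE conjE)
  then show "\<exists>B. (\<forall>n. B n \<in> A n) \<and> range B \<in> BB'" using sub by (intro exI[of _ B] conjI) (auto)
qed

lemma step2: "S1 (GK X) (GOmega X) \<Longrightarrow> S1 (GK X) (GCov X)"
  by (rule S1_mono[rotated]) (auto simp: GOmega_def)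

lemma step3: assumes "S1 (GK X) (GCov X)" shows "alster_space X"
  unfolding alster_space_def
proof
  fix \<U> assume U: "\<U> \<in> GK X"
  have "\<forall>n. (\<lambda>n. \<U>) n \<in> GK X" using U by simp
  from mp[OF spec[OF assms[unfolded S1_def], of "\<lambda>n. \<U>"] this]
  obtain B :: "nat \<Rightarrow> 'a set" where B: "\<forall>n. B n \<in> \<U>" "range B \<in> GCov X"
    by auto
  then show "\<exists>\<V>\<subseteq>\<U>. countable \<V> \<and> topspace X \<subseteq> \<Union> \<V>"
    unfolding GCov_def by (intro exI[of _ "range B"]) auto
qed

theorem lemma4p3:
  fixes X :: "'a topology"
  assumes "t1_space X" and "infinite (topspace X)"
  shows "(alster_space X \<longleftrightarrow> S1 (GK X) (GCov X))
       \<and> (S1 (GK X) (GCov X) \<longleftrightarrow> S1 (GK X) (GOmega X))"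
proof -
  have "alster_space X \<Longrightarrow> S1 (GK X) (GOmega X)" by (rule step1[OF _ assms(2)])
  then show ?thesis using step2[of X] step3[of X] by (intro conjI iffI) simp_all
qed

end
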